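(* Let $\mathcal{A}$ be an additive category and let $(\mathcal{E}_\omega)_{\omega\in\Omega}$ be a nonempty family of exact structures on $\mathcal{A}$. Then the intersection $\bigcap_{\omega\in\Omega}\mathcal{E}_\omega=\{\xi : \xi\in\mathcal{E}_\omega\text{ for all }\omega\in\Omega\}$ is an exact structure on $\mathcal{A}$.
   Context: An exact structure (in the sense of Quillen) on an additive category $\mathcal{A}$ is a class $\mathcal{E}$ of kernel–cokernel pairs $(i,d)$ (i.e. $i$ is a kernel of $d$ and $d$ is a cokernel of $i$), closed under isomorphisms, such that: identities are admissible monics and admissible epics; admissible monics are closed under composition, and so are admissible epics; the pushout of an admissible monic along an arbitrary morphism exists and is an admissible monic; the pullback of an admissible epic along an arbitrary morphism exists and is an admissible epic. Here an admissible monic is a morphism $i$ with $(i,d)\in\mathcal{E}$ for some $d$, and an admissible epic is a morphism $d$ with $(i,d)\in\mathcal{E}$ for some $i$. *)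

theory Defs
  imports Main
begin

text \<open>An additive category presented concretely: a type of objects, a type of
  morphisms, the set of objects and morphisms, domain/codomain, composition
  (cmp g f = g after f), identities, and the abelian group structure on hom-sets
  (addition, negation, zero morphisms).\<close>

record ('o, 'm) addcat =
  Ob  :: "'o set"
  Mor :: "'m set"
  dom :: "'m \<Rightarrow> 'o"
  cod :: "'m \<Rightarrow> 'o"
  cmp :: "'m \<Rightarrow> 'm \<Rightarrow> 'm"
  idm :: "'o \<Rightarrow> 'm"
  add :: "'m \<Rightarrow> 'm \<Rightarrow> 'm"
  neg :: "'m \<Rightarrow> 'm"
  zer :: "'o \<Rightarrow> 'o \<Rightarrow> 'm"

definition hom :: "('o, 'm, 'x) addcat_scheme \<Rightarrow> 'o \<Rightarrow> 'o \<Rightarrow> 'm set" where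
  "hom C a b = {f \<in> Mor C. dom C f = a \<and> cod C f = b}"

definition category :: "('o, 'm, 'x) addcat_scheme \<Rightarrow> bool" where
  "category C \<longleftrightarrow>
     (\<forall>f \<in> Mor C. dom C f \<in> Ob C \<and> cod C f \<in> Ob C) \<and>
     (\<forall>a \<in> Ob C. idm C a \<in> hom C a a) \<and>
     (\<forall>a \<in> Ob C. \<forall>b \<in> Ob C. \<forall>c \<in> Ob C. \<forall>f \<in> hom C a b. \<forall>g \<in> hom C b c.
        cmp C g f \<in> hom C a c) \<and>
     (\<forall>f \<in> Mor C. cmp C f (idm C (dom C f)) = f \<and> cmp C (idm C (cod C f)) f = f) \<and>
     (\<forall>f \<in> Mor C. \<forall>g \<in> Mor C. \<forall>h \<in> Mor C. cod C f = dom C g \<longrightarrow> cod C g = dom C h \<longrightarrow>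
        cmp C h (cmp C g f) = cmp C (cmp C h g) f)"

definition preadditive :: "('o, 'm, 'x) addcat_scheme \<Rightarrow> bool" where
  "preadditive C \<longleftrightarrow> category C \<and>
     (\<forall>a \<in> Ob C. \<forall>b \<in> Ob C.
        zer C a b \<in> hom C a b \<and>
        (\<forall>f \<in> hom C a b. \<forall>g \<in> hom C a b. add C f g \<in> hom C a b) \<and>
        (\<forall>f \<in> hom C a b. neg C f \<in> hom C a b) \<and>
        (\<forall>f \<in> hom C a b. \<forall>g \<in> hom C a b. \<forall>h \<in> hom C a b.
            add C (add C f g) h = add C f (add C g h)) \<and>
        (\<forall>f \<in> hom C a b. \<forall>g \<in> hom C a b. add C f g = add C g f) \<and>
        (\<forall>f \<in> hom C a b. add C f (zer C a b) = f) \<and>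
        (\<forall>f \<in> hom C a b. add C f (neg C f) = zer C a b)) \<and>
     (\<forall>a \<in> Ob C. \<forall>b \<in> Ob C. \<forall>c \<in> Ob C.
        \<forall>f \<in> hom C a b. \<forall>f' \<in> hom C a b. \<forall>g \<in> hom C b c. \<forall>g' \<in> hom C b c.
          cmp C g (add C f f') = add C (cmp C g f) (cmp C g f') \<and>
          cmp C (add C g g') f = add C (cmp C g f) (cmp C g' f))"

definition zero_object :: "('o, 'm, 'x) addcat_scheme \<Rightarrow> 'o \<Rightarrow> bool" where
  "zero_object C z \<longleftrightarrow> z \<in> Ob C \<and>
     (\<forall>a \<in> Ob C. (\<exists>!f. f \<in> hom C z a) \<and> (\<exists>!f. f \<in> hom C a z))"

definition is_biproduct :: "('o, 'm, 'x) addcat_scheme \<Rightarrow> 'o \<Rightarrow> 'o \<Rightarrow> 'o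
    \<Rightarrow> 'm \<Rightarrow> 'm \<Rightarrow> 'm \<Rightarrow> 'm \<Rightarrow> bool" where
  "is_biproduct C a b c i1 i2 p1 p2 \<longleftrightarrow> c \<in> Ob C \<and>
     i1 \<in> hom C a c \<and> i2 \<in> hom C b c \<and> p1 \<in> hom C c a \<and> p2 \<in> hom C c b \<and>
     cmp C p1 i1 = idm C a \<and> cmp C p2 i2 = idm C b \<and>
     cmp C p1 i2 = zer C b a \<and> cmp C p2 i1 = zer C a b \<and>
     add C (cmp C i1 p1) (cmp C i2 p2) = idm C c"

definition additive_category :: "('o, 'm, 'x) addcat_scheme \<Rightarrow> bool" where
  "additive_category C \<longleftrightarrow> preadditive C \<and>
     (\<exists>z. zero_object C z) \<and>
     (\<forall>a \<in> Ob C. \<forall>b \<in> Ob C. \<exists>c i1 i2 p1 p2. is_biproduct C a b c i1 i2 p1 p2)"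

definition is_iso :: "('o, 'm, 'x) addcat_scheme \<Rightarrow> 'm \<Rightarrow> bool" where
  "is_iso C f \<longleftrightarrow> f \<in> Mor C \<and>
     (\<exists>g \<in> hom C (cod C f) (dom C f).
        cmp C g f = idm C (dom C f) \<and> cmp C f g = idm C (cod C f))"

definition is_kernel :: "('o, 'm, 'x) addcat_scheme \<Rightarrow> 'm \<Rightarrow> 'm \<Rightarrow> bool" where
  "is_kernel C i d \<longleftrightarrow> i \<in> Mor C \<and> d \<in> Mor C \<and> cod C i = dom C d \<and>
     cmp C d i = zer C (dom C i) (cod C d) \<and>
     (\<forall>x \<in> Ob C. \<forall>f \<in> hom C x (dom C d). cmp C d f = zer C x (cod C d) \<longrightarrow>
        (\<exists>!g. g \<in> hom C x (dom C i) \<and> cmp C i g = f))"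

definition is_cokernel :: "('o, 'm, 'x) addcat_scheme \<Rightarrow> 'm \<Rightarrow> 'm \<Rightarrow> bool" where
  "is_cokernel C d i \<longleftrightarrow> i \<in> Mor C \<and> d \<in> Mor C \<and> cod C i = dom C d \<and>
     cmp C d i = zer C (dom C i) (cod C d) \<and>
     (\<forall>x \<in> Ob C. \<forall>f \<in> hom C (cod C i) x. cmp C f i = zer C (dom C i) x \<longrightarrow>
        (\<exists>!g. g \<in> hom C (cod C d) x \<and> cmp C g d = f))"

definition kc_pair :: "('o, 'm, 'x) addcat_scheme \<Rightarrow> 'm \<times> 'm \<Rightarrow> bool" where
  "kc_pair C p \<longleftrightarrow> is_kernel C (fst p) (snd p) \<and> is_cokernel C (snd p) (fst p)"

definition kc_iso :: "('o, 'm, 'x) addcat_scheme \<Rightarrow> 'm \<times> 'm \<Rightarrow> 'm \<times> 'm \<Rightarrow> bool" where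
  "kc_iso C p q \<longleftrightarrow> (\<exists>\<alpha> \<beta> \<gamma>.
     \<alpha> \<in> hom C (dom C (fst p)) (dom C (fst q)) \<and>
     \<beta> \<in> hom C (cod C (fst p)) (cod C (fst q)) \<and>
     \<gamma> \<in> hom C (cod C (snd p)) (cod C (snd q)) \<and>
     is_iso C \<alpha> \<and> is_iso C \<beta> \<and> is_iso C \<gamma> \<and>
     cmp C (fst q) \<alpha> = cmp C \<beta> (fst p) \<and>
     cmp C (snd q) \<beta> = cmp C \<gamma> (snd p))"

definition adm_monic :: "('o, 'm, 'x) addcat_scheme \<Rightarrow> ('m \<times> 'm) set \<Rightarrow> 'm \<Rightarrow> bool" where
  "adm_monic C E i \<longleftrightarrow> (\<exists>d. (i, d) \<in> E)"

definition adm_epic :: "('o, 'm, 'x) addcat_scheme \<Rightarrow> ('m \<times> 'm) set \<Rightarrow> 'm \<Rightarrow> bool" where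
  "adm_epic C E d \<longleftrightarrow> (\<exists>i. (i, d) \<in> E)"

definition is_pushout :: "('o, 'm, 'x) addcat_scheme \<Rightarrow> 'm \<Rightarrow> 'm \<Rightarrow> 'm \<Rightarrow> 'm \<Rightarrow> bool" where
  "is_pushout C i f i' f' \<longleftrightarrow>
     i \<in> Mor C \<and> f \<in> Mor C \<and> i' \<in> Mor C \<and> f' \<in> Mor C \<and>
     dom C f = dom C i \<and> dom C i' = cod C f \<and> dom C f' = cod C i \<and> cod C i' = cod C f' \<and>
     cmp C i' f = cmp C f' i \<and>
     (\<forall>x \<in> Ob C. \<forall>g \<in> hom C (cod C f) x. \<forall>h \<in> hom C (cod C i) x.
        cmp C g f = cmp C h i \<longrightarrow>
        (\<exists>!u. u \<in> hom C (cod C i') x \<and> cmp C u i' = g \<and> cmp C u f' = h))"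

definition is_pullback :: "('o, 'm, 'x) addcat_scheme \<Rightarrow> 'm \<Rightarrow> 'm \<Rightarrow> 'm \<Rightarrow> 'm \<Rightarrow> bool" where
  "is_pullback C d f d' f' \<longleftrightarrow>
     d \<in> Mor C \<and> f \<in> Mor C \<and> d' \<in> Mor C \<and> f' \<in> Mor C \<and>
     cod C f = cod C d \<and> cod C d' = dom C f \<and> cod C f' = dom C d \<and> dom C d' = dom C f' \<and>
     cmp C f d' = cmp C d f' \<and>
     (\<forall>x \<in> Ob C. \<forall>g \<in> hom C x (dom C f). \<forall>h \<in> hom C x (dom C d).
        cmp C f g = cmp C d h \<longrightarrow>
        (\<exists>!u. u \<in> hom C x (dom C d') \<and> cmp C d' u = g \<and> cmp C f' u = h))"

definition exact_structure :: "('o, 'm, 'x) addcat_scheme \<Rightarrow> ('m \<times> 'm) set \<Rightarrow> bool" where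
  "exact_structure C E \<longleftrightarrow>
     (\<forall>p \<in> E. kc_pair C p) \<and>
     (\<forall>p \<in> E. \<forall>q. kc_pair C q \<and> kc_iso C p q \<longrightarrow> q \<in> E) \<and>
     (\<forall>a \<in> Ob C. adm_monic C E (idm C a) \<and> adm_epic C E (idm C a)) \<and>
     (\<forall>i i'. adm_monic C E i \<and> adm_monic C E i' \<and> cod C i = dom C i' \<longrightarrow>
        adm_monic C E (cmp C i' i)) \<and>
     (\<forall>d d'. adm_epic C E d \<and> adm_epic C E d' \<and> cod C d = dom C d' \<longrightarrow>
        adm_epic C E (cmp C d' d)) \<and>
     (\<forall>i f. adm_monic C E i \<and> f \<in> Mor C \<and> dom C f = dom C i \<longrightarrow>
        (\<exists>i' f'. is_pushout C i f i' f' \<and> adm_monic C E i')) \<and>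
     (\<forall>d f. adm_epic C E d \<and> f \<in> Mor C \<and> cod C f = cod C d \<longrightarrow>
        (\<exists>d' f'. is_pullback C d f d' f' \<and> adm_epic C E d'))"

end

theory Submission
  imports Defs
begin

context
  fixes C :: "('o, 'm, 'x) addcat_scheme"
  assumes cat: "category C"
begin

lemma homI: "f \<in> Mor C \<Longrightarrow> dom C f = a \<Longrightarrow> cod C f = b \<Longrightarrow> f \<in> hom C a b"
  by (simp add: hom_def)

lemma homD: "f \<in> hom C a b \<Longrightarrow> f \<in> Mor C \<and> dom C f = a \<and> cod C f = b"
  by (simp add: hom_def)

lemma ob_dom: "f \<in> hom C a b \<Longrightarrow> a \<in> Ob C"
  using cat unfolding category_def hom_def by auto

lemma ob_cod: "f \<in> hom C a b \<Longrightarrow> b \<in> Ob C"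
  using cat unfolding category_def hom_def by auto

lemma comp_hom: "f \<in> hom C a b \<Longrightarrow> g \<in> hom C b c \<Longrightarrow> cmp C g f \<in> hom C a c"
  using cat ob_dom ob_cod unfolding category_def by meson

lemma id_hom: "a \<in> Ob C \<Longrightarrow> idm C a \<in> hom C a a"
  using cat unfolding category_def by blast

lemma id_r: "f \<in> hom C a b \<Longrightarrow> cmp C f (idm C a) = f"
  using cat unfolding category_def hom_def by auto

lemma id_l: "f \<in> hom C a b \<Longrightarrow> cmp C (idm C b) f = f"
  using cat unfolding category_def hom_def by auto

lemma assoc: "f \<in> hom C a b \<Longrightarrow> g \<in> hom C b c \<Longrightarrow> h \<in> hom C c d \<Longrightarrow>
   cmp C h (cmp C g f) = cmp C (cmp C h g) f"
  using cat unfolding category_def hom_def by auto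

lemma kc_transB:
  assumes kc: "kc_pair C (i, d)"
    and u: "u \<in> hom C (cod C i) B'" and v: "v \<in> hom C B' (cod C i)"
    and vu: "cmp C v u = idm C (cod C i)" and uv: "cmp C u v = idm C B'"
  shows "kc_pair C (cmp C u i, cmp C d v)"
proof -
  have K: "is_kernel C i d" and Q: "is_cokernel C d i" using kc by (auto simp: kc_pair_def)
  define a b c where "a = dom C i" "b = cod C i" "c = cod C d"
  have i: "i \<in> hom C a b" using K by (auto simp: is_kernel_def hom_def a_b_c_def)
  have d: "d \<in> hom C b c" using K by (auto simp: is_kernel_def hom_def a_b_c_def)
  have u': "u \<in> hom C b B'" and v': "v \<in> hom C B' b" using u v a_b_c_def by auto
  have vu': "cmp C v u = idm C b" using vu a_b_c_def by auto
  have di: "cmp C d i = zer C a c" using K by (auto simp: is_kernel_def a_b_c_def)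
  have ui: "cmp C u i \<in> hom C a B'" using comp_hom[OF i u'] .
  have dv: "cmp C d v \<in> hom C B' c" using comp_hom[OF v' d] .
  have zz: "cmp C (cmp C d v) (cmp C u i) = zer C a c"
  proof -
    have "cmp C (cmp C d v) (cmp C u i) = cmp C d (cmp C v (cmp C u i))"
      using assoc[OF ui v' d] by simp
    also have "cmp C v (cmp C u i) = cmp C (cmp C v u) i" using assoc[OF i u' v'] .
    also have "\<dots> = i" using vu' id_l[OF i] by simp
    finally show ?thesis using di by simp
  qed
  have ker: "is_kernel C (cmp C u i) (cmp C d v)"
    unfolding is_kernel_def
  proof (intro conjI ballI impI)
    show "cmp C u i \<in> Mor C" "cmp C d v \<in> Mor C" using ui dv by (auto simp: hom_def)
    show "cod C (cmp C u i) = dom C (cmp C d v)" using ui dv by (auto simp: hom_def)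
    show "cmp C (cmp C d v) (cmp C u i) = zer C (dom C (cmp C u i)) (cod C (cmp C d v))"
      using zz ui dv by (auto simp: hom_def)
    fix x f assume x: "x \<in> Ob C" and f: "f \<in> hom C x (dom C (cmp C d v))"
      and fz: "cmp C (cmp C d v) f = zer C x (cod C (cmp C d v))"
    have f': "f \<in> hom C x B'" using f dv by (auto simp: hom_def)
    have vf: "cmp C v f \<in> hom C x b" using comp_hom[OF f' v'] .
    have "cmp C d (cmp C v f) = zer C x c" using fz assoc[OF f' v' d] dv by (auto simp: hom_def)
    hence "\<exists>!g. g \<in> hom C x (dom C i) \<and> cmp C i g = cmp C v f"
      using K x vf d unfolding is_kernel_def by (auto simp: hom_def a_b_c_def)
    then obtain g where g: "g \<in> hom C x a" "cmp C i g = cmp C v f"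
      and gu: "\<And>g'. g' \<in> hom C x a \<Longrightarrow> cmp C i g' = cmp C v f \<Longrightarrow> g' = g"
      using a_b_c_def by blast
    show "\<exists>!g. g \<in> hom C x (dom C (cmp C u i)) \<and> cmp C (cmp C u i) g = f"
    proof (rule ex1I[of _ g])
      have "cmp C (cmp C u i) g = cmp C u (cmp C i g)" using assoc[OF g(1) i u'] by simp
      also have "\<dots> = cmp C (cmp C u v) f" using g(2) assoc[OF f' v' u'] by simp
      also have "\<dots> = f" using uv id_l[OF f'] by simp
      finally show "g \<in> hom C x (dom C (cmp C u i)) \<and> cmp C (cmp C u i) g = f"
        using g ui by (auto simp: hom_def)
    next
      fix g' assume g': "g' \<in> hom C x (dom C (cmp C u i)) \<and> cmp C (cmp C u i) g' = f"
      hence g'h: "g' \<in> hom C x a" using ui by (auto simp: hom_def)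
      have "cmp C i g' = cmp C (cmp C v u) (cmp C i g')" using vu' id_l[OF comp_hom[OF g'h i]] by simp
      also have "\<dots> = cmp C v (cmp C u (cmp C i g'))"
        using assoc[OF comp_hom[OF g'h i] u' v'] by simp
      also have "\<dots> = cmp C v f" using g' assoc[OF g'h i u'] by simp
      finally show "g' = g" using gu g'h by blast
    qed
  qed
  have cok: "is_cokernel C (cmp C d v) (cmp C u i)"
    unfolding is_cokernel_def
  proof (intro conjI ballI impI)
    show "cmp C u i \<in> Mor C" "cmp C d v \<in> Mor C" using ui dv by (auto simp: hom_def)
    show "cod C (cmp C u i) = dom C (cmp C d v)" using ui dv by (auto simp: hom_def)
    show "cmp C (cmp C d v) (cmp C u i) = zer C (dom C (cmp C u i)) (cod C (cmp C d v))"
      using zz ui dv by (auto simp: hom_def)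
    fix x f assume x: "x \<in> Ob C" and f: "f \<in> hom C (cod C (cmp C u i)) x"
      and fz: "cmp C f (cmp C u i) = zer C (dom C (cmp C u i)) x"
    have f': "f \<in> hom C B' x" using f ui by (auto simp: hom_def)
    have fu: "cmp C f u \<in> hom C b x" using comp_hom[OF u' f'] .
    have "cmp C (cmp C f u) i = zer C a x" using fz assoc[OF i u' f'] ui by (auto simp: hom_def)
    hence "\<exists>!g. g \<in> hom C (cod C d) x \<and> cmp C g d = cmp C f u"
      using Q x fu i unfolding is_cokernel_def by (auto simp: hom_def a_b_c_def)
    then obtain g where g: "g \<in> hom C c x" "cmp C g d = cmp C f u"
      and gu: "\<And>g'. g' \<in> hom C c x \<Longrightarrow> cmp C g' d = cmp C f u \<Longrightarrow> g' = g"
      using a_b_c_def by blast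
    show "\<exists>!g. g \<in> hom C (cod C (cmp C d v)) x \<and> cmp C g (cmp C d v) = f"
    proof (rule ex1I[of _ g])
      have "cmp C g (cmp C d v) = cmp C (cmp C g d) v" using assoc[OF v' d g(1)] .
      also have "\<dots> = cmp C f (cmp C u v)" using g(2) assoc[OF v' u' f'] by simp
      also have "\<dots> = f" using uv id_r[OF f'] by simp
      finally show "g \<in> hom C (cod C (cmp C d v)) x \<and> cmp C g (cmp C d v) = f"
        using g dv by (auto simp: hom_def)
    next
      fix g' assume g': "g' \<in> hom C (cod C (cmp C d v)) x \<and> cmp C g' (cmp C d v) = f"
      hence g'h: "g' \<in> hom C c x" using dv by (auto simp: hom_def)
      have "cmp C g' d = cmp C (cmp C g' d) (cmp C v u)" using vu' id_r[OF comp_hom[OF d g'h]] by simp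
      also have "\<dots> = cmp C (cmp C (cmp C g' d) v) u"
        using assoc[OF u' v' comp_hom[OF d g'h]] .
      also have "\<dots> = cmp C f u" using g' assoc[OF v' d g'h] by simp
      finally show "g' = g" using gu g'h by blast
    qed
  qed
  show ?thesis using ker cok by (simp add: kc_pair_def)
qed

end

context
  fixes C :: "('o, 'm, 'x) addcat_scheme"
  assumes pre: "preadditive C"
begin

lemma catp: "category C" using pre by (simp add: preadditive_def)

lemma zer_hom: "a \<in> Ob C \<Longrightarrow> b \<in> Ob C \<Longrightarrow> zer C a b \<in> hom C a b"
  using pre by (simp add: preadditive_def)

lemma idem_zero:
  assumes a: "a \<in> Ob C" and b: "b \<in> Ob C" and y: "y \<in> hom C a b" and yy: "add C y y = y"
  shows "y = zer C a b"
proof -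
  have P: "\<forall>f \<in> hom C a b. \<forall>g \<in> hom C a b. \<forall>h \<in> hom C a b.
            add C (add C f g) h = add C f (add C g h)"
     "\<forall>f \<in> hom C a b. add C f (zer C a b) = f"
     "\<forall>f \<in> hom C a b. add C f (neg C f) = zer C a b"
     "\<forall>f \<in> hom C a b. neg C f \<in> hom C a b"
    using pre a b unfolding preadditive_def by blast+
  have ny: "neg C y \<in> hom C a b" using P(4) y by blast
  have "zer C a b = add C y (neg C y)" using P(3) y by simp
  also have "\<dots> = add C (add C y y) (neg C y)" using yy by simp
  also have "\<dots> = add C y (add C y (neg C y))" using P(1) y ny by blast
  also have "\<dots> = y" using P(2) P(3) y by simp
  finally show ?thesis by simp
qed

lemma comp_zer_r:
  assumes a: "a \<in> Ob C" and g: "g \<in> hom C b c"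
  shows "cmp C g (zer C a b) = zer C a c"
proof -
  have b: "b \<in> Ob C" and c: "c \<in> Ob C" using ob_dom[OF catp g] ob_cod[OF catp g] .
  have z: "zer C a b \<in> hom C a b" using zer_hom a b .
  have zz: "add C (zer C a b) (zer C a b) = zer C a b" using pre a b z unfolding preadditive_def by blast
  have "cmp C g (add C (zer C a b) (zer C a b)) = add C (cmp C g (zer C a b)) (cmp C g (zer C a b))"
    using pre a b c z g unfolding preadditive_def by blast
  hence "add C (cmp C g (zer C a b)) (cmp C g (zer C a b)) = cmp C g (zer C a b)" using zz by simp
  thus ?thesis using idem_zero[OF a c comp_hom[OF catp z g]] by simp
qed

lemma comp_zer_l:
  assumes c: "c \<in> Ob C" and f: "f \<in> hom C a b"
  shows "cmp C (zer C b c) f = zer C a c"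
proof -
  have a: "a \<in> Ob C" and b: "b \<in> Ob C" using ob_dom[OF catp f] ob_cod[OF catp f] .
  have z: "zer C b c \<in> hom C b c" using zer_hom b c .
  have zz: "add C (zer C b c) (zer C b c) = zer C b c" using pre b c z unfolding preadditive_def by blast
  have "cmp C (add C (zer C b c) (zer C b c)) f = add C (cmp C (zer C b c) f) (cmp C (zer C b c) f)"
    using pre a b c z f unfolding preadditive_def by blast
  hence "add C (cmp C (zer C b c) f) (cmp C (zer C b c) f) = cmp C (zer C b c) f" using zz by simp
  thus ?thesis using idem_zero[OF a c comp_hom[OF catp f z]] by simp
qed

lemma kc_transC:
  assumes kc: "kc_pair C (i, d)"
    and u: "u \<in> hom C (cod C d) c'" and v: "v \<in> hom C c' (cod C d)"
    and vu: "cmp C v u = idm C (cod C d)" and uv: "cmp C u v = idm C c'"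
  shows "kc_pair C (i, cmp C u d)"
proof -
  note cat = catp
  have K: "is_kernel C i d" and Q: "is_cokernel C d i" using kc by (auto simp: kc_pair_def)
  define a b c where "a = dom C i" "b = cod C i" "c = cod C d"
  have i: "i \<in> hom C a b" using K by (auto simp: is_kernel_def hom_def a_b_c_def)
  have d: "d \<in> hom C b c" using K by (auto simp: is_kernel_def hom_def a_b_c_def)
  have u': "u \<in> hom C c c'" and v': "v \<in> hom C c' c" using u v a_b_c_def by auto
  have vu': "cmp C v u = idm C c" using vu a_b_c_def by auto
  have aO: "a \<in> Ob C" using ob_dom[OF cat i] .
  have di: "cmp C d i = zer C a c" using K by (auto simp: is_kernel_def a_b_c_def)
  have ud: "cmp C u d \<in> hom C b c'" using comp_hom[OF cat d u'] .
  have zz: "cmp C (cmp C u d) i = zer C a c'"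
    using assoc[OF cat i d u'] di comp_zer_r[OF aO u'] by simp
  have ker: "is_kernel C i (cmp C u d)"
    unfolding is_kernel_def
  proof (intro conjI ballI impI)
    show "i \<in> Mor C" "cmp C u d \<in> Mor C" using i ud by (auto simp: hom_def)
    show "cod C i = dom C (cmp C u d)" using i ud by (auto simp: hom_def)
    show "cmp C (cmp C u d) i = zer C (dom C i) (cod C (cmp C u d))"
      using zz i ud by (auto simp: hom_def)
    fix x f assume x: "x \<in> Ob C" and f: "f \<in> hom C x (dom C (cmp C u d))"
      and fz: "cmp C (cmp C u d) f = zer C x (cod C (cmp C u d))"
    have f': "f \<in> hom C x b" using f ud by (auto simp: hom_def)
    have "cmp C d f = cmp C (cmp C v u) (cmp C d f)" using vu' id_l[OF cat comp_hom[OF cat f' d]] by simp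
    also have "\<dots> = cmp C v (cmp C u (cmp C d f))" using assoc[OF cat comp_hom[OF cat f' d] u' v'] by simp
    also have "\<dots> = cmp C v (zer C x c')" using fz assoc[OF cat f' d u'] ud by (auto simp: hom_def)
    also have "\<dots> = zer C x c" using comp_zer_r[OF x v'] .
    finally have "cmp C d f = zer C x (cod C d)" using a_b_c_def by simp
    thus "\<exists>!g. g \<in> hom C x (dom C i) \<and> cmp C i g = f"
      using K x f' d unfolding is_kernel_def by (auto simp: hom_def a_b_c_def)
  qed
  have cok: "is_cokernel C (cmp C u d) i"
    unfolding is_cokernel_def
  proof (intro conjI ballI impI)
    show "i \<in> Mor C" "cmp C u d \<in> Mor C" using i ud by (auto simp: hom_def)
    show "cod C i = dom C (cmp C u d)" using i ud by (auto simp: hom_def)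
    show "cmp C (cmp C u d) i = zer C (dom C i) (cod C (cmp C u d))"
      using zz i ud by (auto simp: hom_def)
    fix x f assume x: "x \<in> Ob C" and f: "f \<in> hom C (cod C i) x"
      and fz: "cmp C f i = zer C (dom C i) x"
    have f': "f \<in> hom C b x" using f a_b_c_def by simp
    have "\<exists>!g. g \<in> hom C (cod C d) x \<and> cmp C g d = f"
      using Q x f fz unfolding is_cokernel_def by blast
    then obtain g where g: "g \<in> hom C c x" "cmp C g d = f"
      and gu: "\<And>g'. g' \<in> hom C c x \<Longrightarrow> cmp C g' d = f \<Longrightarrow> g' = g"
      using a_b_c_def by blast
    show "\<exists>!g. g \<in> hom C (cod C (cmp C u d)) x \<and> cmp C g (cmp C u d) = f"
    proof (rule ex1I[of _ "cmp C g v"])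
      have "cmp C (cmp C g v) (cmp C u d) = cmp C g (cmp C v (cmp C u d))"
        using assoc[OF cat ud v' g(1)] by simp
      also have "cmp C v (cmp C u d) = d" using assoc[OF cat d u' v'] vu' id_l[OF cat d] by simp
      finally show "cmp C g v \<in> hom C (cod C (cmp C u d)) x \<and> cmp C (cmp C g v) (cmp C u d) = f"
        using g comp_hom[OF cat v' g(1)] ud by (auto simp: hom_def)
    next
      fix g' assume g': "g' \<in> hom C (cod C (cmp C u d)) x \<and> cmp C g' (cmp C u d) = f"
      hence g'h: "g' \<in> hom C c' x" using ud by (auto simp: hom_def)
      have gu': "cmp C g' u \<in> hom C c x" using comp_hom[OF cat u' g'h] .
      have "cmp C (cmp C g' u) d = f" using g' assoc[OF cat d u' g'h] by simp
      hence e: "cmp C g' u = g" using gu gu' by blast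
      have "g' = cmp C g' (cmp C u v)" using uv id_r[OF cat g'h] by simp
      also have "\<dots> = cmp C (cmp C g' u) v" using assoc[OF cat v' u' g'h] .
      finally show "g' = cmp C g v" using e by simp
    qed
  qed
  show ?thesis using ker cok by (simp add: kc_pair_def)
qed

lemma kc_transA:
  assumes kc: "kc_pair C (i, d)"
    and u: "u \<in> hom C a' (dom C i)" and v: "v \<in> hom C (dom C i) a'"
    and vu: "cmp C v u = idm C a'" and uv: "cmp C u v = idm C (dom C i)"
  shows "kc_pair C (cmp C i u, d)"
proof -
  note cat = catp
  have K: "is_kernel C i d" and Q: "is_cokernel C d i" using kc by (auto simp: kc_pair_def)
  define a b c where "a = dom C i" "b = cod C i" "c = cod C d"
  have i: "i \<in> hom C a b" using K by (auto simp: is_kernel_def hom_def a_b_c_def)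
  have d: "d \<in> hom C b c" using K by (auto simp: is_kernel_def hom_def a_b_c_def)
  have u': "u \<in> hom C a' a" and v': "v \<in> hom C a a'" using u v a_b_c_def by auto
  have uv': "cmp C u v = idm C a" using uv a_b_c_def by auto
  have cO: "c \<in> Ob C" using ob_cod[OF cat d] .
  have di: "cmp C d i = zer C a c" using K by (auto simp: is_kernel_def a_b_c_def)
  have iu: "cmp C i u \<in> hom C a' b" using comp_hom[OF cat u' i] .
  have zz: "cmp C d (cmp C i u) = zer C a' c"
    using assoc[OF cat u' i d] di comp_zer_l[OF cO u'] by simp
  have ker: "is_kernel C (cmp C i u) d"
    unfolding is_kernel_def
  proof (intro conjI ballI impI)
    show "cmp C i u \<in> Mor C" "d \<in> Mor C" using iu d by (auto simp: hom_def)
    show "cod C (cmp C i u) = dom C d" using iu d by (auto simp: hom_def)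
    show "cmp C d (cmp C i u) = zer C (dom C (cmp C i u)) (cod C d)"
      using zz iu d by (auto simp: hom_def)
    fix x f assume x: "x \<in> Ob C" and f: "f \<in> hom C x (dom C d)"
      and fz: "cmp C d f = zer C x (cod C d)"
    have "\<exists>!g. g \<in> hom C x (dom C i) \<and> cmp C i g = f"
      using K x f fz unfolding is_kernel_def by blast
    then obtain g where g: "g \<in> hom C x a" "cmp C i g = f"
      and gu: "\<And>g'. g' \<in> hom C x a \<Longrightarrow> cmp C i g' = f \<Longrightarrow> g' = g"
      using a_b_c_def by blast
    show "\<exists>!g. g \<in> hom C x (dom C (cmp C i u)) \<and> cmp C (cmp C i u) g = f"
    proof (rule ex1I[of _ "cmp C v g"])
      have "cmp C (cmp C i u) (cmp C v g) = cmp C (cmp C (cmp C i u) v) g"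
        using assoc[OF cat g(1) v' iu] .
      also have "cmp C (cmp C i u) v = i" using assoc[OF cat v' u' i] uv' id_r[OF cat i] by simp
      finally show "cmp C v g \<in> hom C x (dom C (cmp C i u)) \<and> cmp C (cmp C i u) (cmp C v g) = f"
        using g comp_hom[OF cat g(1) v'] iu by (auto simp: hom_def)
    next
      fix g' assume g': "g' \<in> hom C x (dom C (cmp C i u)) \<and> cmp C (cmp C i u) g' = f"
      hence g'h: "g' \<in> hom C x a'" using iu by (auto simp: hom_def)
      have ug': "cmp C u g' \<in> hom C x a" using comp_hom[OF cat g'h u'] .
      have "cmp C i (cmp C u g') = f" using g' assoc[OF cat g'h u' i] by simp
      hence e: "cmp C u g' = g" using gu ug' by blast
      have "g' = cmp C (cmp C v u) g'" using vu id_l[OF cat g'h] by simp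
      also have "\<dots> = cmp C v (cmp C u g')" using assoc[OF cat g'h u' v'] by simp
      finally show "g' = cmp C v g" using e by simp
    qed
  qed
  have cok: "is_cokernel C d (cmp C i u)"
    unfolding is_cokernel_def
  proof (intro conjI ballI impI)
    show "cmp C i u \<in> Mor C" "d \<in> Mor C" using iu d by (auto simp: hom_def)
    show "cod C (cmp C i u) = dom C d" using iu d by (auto simp: hom_def)
    show "cmp C d (cmp C i u) = zer C (dom C (cmp C i u)) (cod C d)"
      using zz iu d by (auto simp: hom_def)
    fix x f assume x: "x \<in> Ob C" and f: "f \<in> hom C (cod C (cmp C i u)) x"
      and fz: "cmp C f (cmp C i u) = zer C (dom C (cmp C i u)) x"
    have f': "f \<in> hom C b x" using f iu by (auto simp: hom_def)
    have "cmp C f i = cmp C f (cmp C i (cmp C u v))" using uv' id_r[OF cat i] by simp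
    also have "\<dots> = cmp C (cmp C f (cmp C i u)) v"
      using assoc[OF cat v' u' i] assoc[OF cat v' iu f'] by simp
    also have "\<dots> = cmp C (zer C a' x) v" using fz iu by (auto simp: hom_def)
    also have "\<dots> = zer C a x" using comp_zer_l[OF x v'] .
    finally have "cmp C f i = zer C (dom C i) x" using a_b_c_def by simp
    thus "\<exists>!g. g \<in> hom C (cod C d) x \<and> cmp C g d = f"
      using Q x f' i unfolding is_cokernel_def by (auto simp: hom_def a_b_c_def)
  qed
  show ?thesis using ker cok by (simp add: kc_pair_def)
qed

lemma coker_unique:
  assumes kc: "kc_pair C (i, d)" and kc': "kc_pair C (i, d')"
  shows "\<exists>u v. u \<in> hom C (cod C d) (cod C d') \<and> v \<in> hom C (cod C d') (cod C d) \<and>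
     cmp C v u = idm C (cod C d) \<and> cmp C u v = idm C (cod C d') \<and> d' = cmp C u d"
proof -
  note cat = catp
  have K: "is_kernel C i d" and Q: "is_cokernel C d i" using kc by (auto simp: kc_pair_def)
  have K': "is_kernel C i d'" and Q': "is_cokernel C d' i" using kc' by (auto simp: kc_pair_def)
  define a b c c' where "a = dom C i" "b = cod C i" "c = cod C d" "c' = cod C d'"
  have d: "d \<in> hom C b c" using K by (auto simp: is_kernel_def hom_def a_b_c_c'_def)
  have d': "d' \<in> hom C b c'" using K' by (auto simp: is_kernel_def hom_def a_b_c_c'_def)
  have cO: "c \<in> Ob C" using ob_cod[OF cat d] .
  have c'O: "c' \<in> Ob C" using ob_cod[OF cat d'] .
  have di: "cmp C d i = zer C a c" using K by (auto simp: is_kernel_def a_b_c_c'_def)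
  have d'i: "cmp C d' i = zer C a c'" using K' by (auto simp: is_kernel_def a_b_c_c'_def)
  have U: "\<And>x f. x \<in> Ob C \<Longrightarrow> f \<in> hom C b x \<Longrightarrow> cmp C f i = zer C a x \<Longrightarrow>
        \<exists>!g. g \<in> hom C c x \<and> cmp C g d = f"
    using Q unfolding is_cokernel_def a_b_c_c'_def by blast
  have U': "\<And>x f. x \<in> Ob C \<Longrightarrow> f \<in> hom C b x \<Longrightarrow> cmp C f i = zer C a x \<Longrightarrow>
        \<exists>!g. g \<in> hom C c' x \<and> cmp C g d' = f"
    using Q' unfolding is_cokernel_def a_b_c_c'_def by blast
  obtain u where u: "u \<in> hom C c c'" "cmp C u d = d'" using U[OF c'O d' d'i] by blast
  obtain v where v: "v \<in> hom C c' c" "cmp C v d' = d" using U'[OF cO d di] by blast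
  have vu: "cmp C v u = idm C c"
  proof -
    have 1: "cmp C (cmp C v u) d = d" using assoc[OF cat d u(1) v(1)] u v by simp
    have 2: "cmp C (idm C c) d = d" using id_l[OF cat d] .
    show ?thesis using U[OF cO d di] 1 2 comp_hom[OF cat u(1) v(1)] id_hom[OF cat cO] by blast
  qed
  have uv: "cmp C u v = idm C c'"
  proof -
    have 1: "cmp C (cmp C u v) d' = d'" using assoc[OF cat d' v(1) u(1)] u v by simp
    have 2: "cmp C (idm C c') d' = d'" using id_l[OF cat d'] .
    show ?thesis using U'[OF c'O d' d'i] 1 2 comp_hom[OF cat v(1) u(1)] id_hom[OF cat c'O] by blast
  qed
  show ?thesis using u v vu uv a_b_c_c'_def by metis
qed

lemma ker_unique:
  assumes kc: "kc_pair C (i, d)" and kc': "kc_pair C (i', d)"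
  shows "\<exists>u v. u \<in> hom C (dom C i) (dom C i') \<and> v \<in> hom C (dom C i') (dom C i) \<and>
     cmp C v u = idm C (dom C i) \<and> cmp C u v = idm C (dom C i') \<and> i = cmp C i' u"
proof -
  note cat = catp
  have K: "is_kernel C i d" using kc by (auto simp: kc_pair_def)
  have K': "is_kernel C i' d" using kc' by (auto simp: kc_pair_def)
  define a a' b c where "a = dom C i" "a' = dom C i'" "b = dom C d" "c = cod C d"
  have i: "i \<in> hom C a b" using K by (auto simp: is_kernel_def hom_def a_a'_b_c_def)
  have i': "i' \<in> hom C a' b" using K' by (auto simp: is_kernel_def hom_def a_a'_b_c_def)
  have aO: "a \<in> Ob C" using ob_dom[OF cat i] .
  have a'O: "a' \<in> Ob C" using ob_dom[OF cat i'] .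
  have di: "cmp C d i = zer C a c" using K by (auto simp: is_kernel_def a_a'_b_c_def)
  have di': "cmp C d i' = zer C a' c" using K' by (auto simp: is_kernel_def a_a'_b_c_def)
  have U: "\<And>x f. x \<in> Ob C \<Longrightarrow> f \<in> hom C x b \<Longrightarrow> cmp C d f = zer C x c \<Longrightarrow>
        \<exists>!g. g \<in> hom C x a \<and> cmp C i g = f"
    using K unfolding is_kernel_def a_a'_b_c_def by blast
  have U': "\<And>x f. x \<in> Ob C \<Longrightarrow> f \<in> hom C x b \<Longrightarrow> cmp C d f = zer C x c \<Longrightarrow>
        \<exists>!g. g \<in> hom C x a' \<and> cmp C i' g = f"
    using K' unfolding is_kernel_def a_a'_b_c_def by blast
  obtain u where u: "u \<in> hom C a a'" "cmp C i' u = i" using U'[OF aO i di] by blast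
  obtain v where v: "v \<in> hom C a' a" "cmp C i v = i'" using U[OF a'O i' di'] by blast
  have vu: "cmp C v u = idm C a"
  proof -
    have 1: "cmp C i (cmp C v u) = i" using assoc[OF cat u(1) v(1) i] u v by simp
    have 2: "cmp C i (idm C a) = i" using id_r[OF cat i] .
    show ?thesis using U[OF aO i di] 1 2 comp_hom[OF cat u(1) v(1)] id_hom[OF cat aO] by blast
  qed
  have uv: "cmp C u v = idm C a'"
  proof -
    have 1: "cmp C i' (cmp C u v) = i'" using assoc[OF cat v(1) u(1) i'] u v by simp
    have 2: "cmp C i' (idm C a') = i'" using id_r[OF cat i'] .
    show ?thesis using U'[OF a'O i' di'] 1 2 comp_hom[OF cat v(1) u(1)] id_hom[OF cat a'O] by blast
  qed
  show ?thesis using u v vu uv a_a'_b_c_def by metis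
qed

lemma po_unique:
  assumes p1: "is_pushout C i f i1 f1" and p2: "is_pushout C i f i2 f2"
  shows "\<exists>u v. u \<in> hom C (cod C i1) (cod C i2) \<and> v \<in> hom C (cod C i2) (cod C i1) \<and>
     cmp C v u = idm C (cod C i1) \<and> cmp C u v = idm C (cod C i2) \<and>
     cmp C u i1 = i2 \<and> cmp C u f1 = f2"
proof -
  note cat = catp
  define P1 P2 where "P1 = cod C i1" "P2 = cod C i2"
  have i1: "i1 \<in> hom C (cod C f) P1" and f1: "f1 \<in> hom C (cod C i) P1"
    using p1 by (auto simp: is_pushout_def hom_def P1_P2_def)
  have i2: "i2 \<in> hom C (cod C f) P2" and f2: "f2 \<in> hom C (cod C i) P2"
    using p2 by (auto simp: is_pushout_def hom_def P1_P2_def)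
  have O1: "P1 \<in> Ob C" using ob_cod[OF cat i1] .
  have O2: "P2 \<in> Ob C" using ob_cod[OF cat i2] .
  have c1: "cmp C i1 f = cmp C f1 i" using p1 by (simp add: is_pushout_def)
  have c2: "cmp C i2 f = cmp C f2 i" using p2 by (simp add: is_pushout_def)
  have U1: "\<And>x g h. x \<in> Ob C \<Longrightarrow> g \<in> hom C (cod C f) x \<Longrightarrow> h \<in> hom C (cod C i) x \<Longrightarrow>
      cmp C g f = cmp C h i \<Longrightarrow> \<exists>!u. u \<in> hom C P1 x \<and> cmp C u i1 = g \<and> cmp C u f1 = h"
    using p1 unfolding is_pushout_def P1_P2_def by blast
  have U2: "\<And>x g h. x \<in> Ob C \<Longrightarrow> g \<in> hom C (cod C f) x \<Longrightarrow> h \<in> hom C (cod C i) x \<Longrightarrow>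
      cmp C g f = cmp C h i \<Longrightarrow> \<exists>!u. u \<in> hom C P2 x \<and> cmp C u i2 = g \<and> cmp C u f2 = h"
    using p2 unfolding is_pushout_def P1_P2_def by blast
  obtain u where u: "u \<in> hom C P1 P2" "cmp C u i1 = i2" "cmp C u f1 = f2" using U1[OF O2 i2 f2 c2] by blast
  obtain v where v: "v \<in> hom C P2 P1" "cmp C v i2 = i1" "cmp C v f2 = f1" using U2[OF O1 i1 f1 c1] by blast
  have vu: "cmp C v u = idm C P1"
  proof -
    have "cmp C (cmp C v u) i1 = i1" "cmp C (cmp C v u) f1 = f1"
      using assoc[OF cat i1 u(1) v(1)] assoc[OF cat f1 u(1) v(1)] u v by simp_all
    moreover have "cmp C (idm C P1) i1 = i1" "cmp C (idm C P1) f1 = f1" using id_l[OF cat i1] id_l[OF cat f1] .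
    ultimately show ?thesis using U1[OF O1 i1 f1 c1] comp_hom[OF cat u(1) v(1)] id_hom[OF cat O1] by blast
  qed
  have uv: "cmp C u v = idm C P2"
  proof -
    have "cmp C (cmp C u v) i2 = i2" "cmp C (cmp C u v) f2 = f2"
      using assoc[OF cat i2 v(1) u(1)] assoc[OF cat f2 v(1) u(1)] u v by simp_all
    moreover have "cmp C (idm C P2) i2 = i2" "cmp C (idm C P2) f2 = f2" using id_l[OF cat i2] id_l[OF cat f2] .
    ultimately show ?thesis using U2[OF O2 i2 f2 c2] comp_hom[OF cat v(1) u(1)] id_hom[OF cat O2] by blast
  qed
  show ?thesis using u v vu uv P1_P2_def by metis
qed

lemma pb_unique:
  assumes p1: "is_pullback C d f d1 f1" and p2: "is_pullback C d f d2 f2"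
  shows "\<exists>u v. u \<in> hom C (dom C d1) (dom C d2) \<and> v \<in> hom C (dom C d2) (dom C d1) \<and>
     cmp C v u = idm C (dom C d1) \<and> cmp C u v = idm C (dom C d2) \<and>
     cmp C d2 u = d1 \<and> cmp C f2 u = f1"
proof -
  note cat = catp
  define P1 P2 where "P1 = dom C d1" "P2 = dom C d2"
  have d1: "d1 \<in> hom C P1 (dom C f)" and f1: "f1 \<in> hom C P1 (dom C d)"
    using p1 by (auto simp: is_pullback_def hom_def P1_P2_def)
  have d2: "d2 \<in> hom C P2 (dom C f)" and f2: "f2 \<in> hom C P2 (dom C d)"
    using p2 by (auto simp: is_pullback_def hom_def P1_P2_def)
  have O1: "P1 \<in> Ob C" using ob_dom[OF cat d1] .
  have O2: "P2 \<in> Ob C" using ob_dom[OF cat d2] .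
  have c1: "cmp C f d1 = cmp C d f1" using p1 by (simp add: is_pullback_def)
  have c2: "cmp C f d2 = cmp C d f2" using p2 by (simp add: is_pullback_def)
  have U1: "\<And>x g h. x \<in> Ob C \<Longrightarrow> g \<in> hom C x (dom C f) \<Longrightarrow> h \<in> hom C x (dom C d) \<Longrightarrow>
      cmp C f g = cmp C d h \<Longrightarrow> \<exists>!u. u \<in> hom C x P1 \<and> cmp C d1 u = g \<and> cmp C f1 u = h"
    using p1 unfolding is_pullback_def P1_P2_def by blast
  have U2: "\<And>x g h. x \<in> Ob C \<Longrightarrow> g \<in> hom C x (dom C f) \<Longrightarrow> h \<in> hom C x (dom C d) \<Longrightarrow>
      cmp C f g = cmp C d h \<Longrightarrow> \<exists>!u. u \<in> hom C x P2 \<and> cmp C d2 u = g \<and> cmp C f2 u = h"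
    using p2 unfolding is_pullback_def P1_P2_def by blast
  obtain u where u: "u \<in> hom C P1 P2" "cmp C d2 u = d1" "cmp C f2 u = f1" using U2[OF O1 d1 f1 c1] by blast
  obtain v where v: "v \<in> hom C P2 P1" "cmp C d1 v = d2" "cmp C f1 v = f2" using U1[OF O2 d2 f2 c2] by blast
  have vu: "cmp C v u = idm C P1"
  proof -
    have "cmp C d1 (cmp C v u) = d1" "cmp C f1 (cmp C v u) = f1"
      using assoc[OF cat u(1) v(1) d1] assoc[OF cat u(1) v(1) f1] u v by simp_all
    moreover have "cmp C d1 (idm C P1) = d1" "cmp C f1 (idm C P1) = f1" using id_r[OF cat d1] id_r[OF cat f1] .
    ultimately show ?thesis using U1[OF O1 d1 f1 c1] comp_hom[OF cat u(1) v(1)] id_hom[OF cat O1] by blast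
  qed
  have uv: "cmp C u v = idm C P2"
  proof -
    have "cmp C d2 (cmp C u v) = d2" "cmp C f2 (cmp C u v) = f2"
      using assoc[OF cat v(1) u(1) d2] assoc[OF cat v(1) u(1) f2] u v by simp_all
    moreover have "cmp C d2 (idm C P2) = d2" "cmp C f2 (idm C P2) = f2" using id_r[OF cat d2] id_r[OF cat f2] .
    ultimately show ?thesis using U2[OF O2 d2 f2 c2] comp_hom[OF cat v(1) u(1)] id_hom[OF cat O2] by blast
  qed
  show ?thesis using u v vu uv P1_P2_def by metis
qed

end


lemma iso_of: "category C \<Longrightarrow> u \<in> hom C a b \<Longrightarrow> v \<in> hom C b a \<Longrightarrow> cmp C v u = idm C a \<Longrightarrow>
   cmp C u v = idm C b \<Longrightarrow> is_iso C u"
  unfolding is_iso_def by (auto simp: hom_def)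

lemma id_iso: "category C \<Longrightarrow> a \<in> Ob C \<Longrightarrow> is_iso C (idm C a)"
  using iso_of[of C "idm C a" a a "idm C a"] id_hom[of C a] id_l[of C "idm C a" a a] by blast

lemma ex_kc: "exact_structure C E \<Longrightarrow> p \<in> E \<Longrightarrow> kc_pair C p"
  unfolding exact_structure_def by blast

lemma ex_iso: "exact_structure C E \<Longrightarrow> p \<in> E \<Longrightarrow> kc_pair C q \<Longrightarrow> kc_iso C p q \<Longrightarrow> q \<in> E"
  unfolding exact_structure_def by blast

lemma kc_homs: "kc_pair C (i, d) \<Longrightarrow> i \<in> hom C (dom C i) (cod C i) \<and> d \<in> hom C (cod C i) (cod C d)"
  unfolding kc_pair_def is_kernel_def hom_def by auto

lemma ex_id: "exact_structure C E \<Longrightarrow> a \<in> Ob C \<Longrightarrow> adm_monic C E (idm C a) \<and> adm_epic C E (idm C a)"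
  unfolding exact_structure_def by blast

lemma ex_compM: "exact_structure C E \<Longrightarrow> adm_monic C E i \<Longrightarrow> adm_monic C E i' \<Longrightarrow> cod C i = dom C i' \<Longrightarrow>
   adm_monic C E (cmp C i' i)"
  unfolding exact_structure_def by blast

lemma ex_compE: "exact_structure C E \<Longrightarrow> adm_epic C E i \<Longrightarrow> adm_epic C E i' \<Longrightarrow> cod C i = dom C i' \<Longrightarrow>
   adm_epic C E (cmp C i' i)"
  unfolding exact_structure_def by blast

lemma ex_po: "exact_structure C E \<Longrightarrow> adm_monic C E i \<Longrightarrow> f \<in> Mor C \<Longrightarrow> dom C f = dom C i \<Longrightarrow>
   \<exists>i' f'. is_pushout C i f i' f' \<and> adm_monic C E i'"
  unfolding exact_structure_def by blast

lemma ex_pb: "exact_structure C E \<Longrightarrow> adm_epic C E d \<Longrightarrow> f \<in> Mor C \<Longrightarrow> cod C f = cod C d \<Longrightarrow>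
   \<exists>d' f'. is_pullback C d f d' f' \<and> adm_epic C E d'"
  unfolding exact_structure_def by blast

lemma ex_intro: "(\<forall>p \<in> E. kc_pair C p) \<Longrightarrow>
     (\<forall>p \<in> E. \<forall>q. kc_pair C q \<and> kc_iso C p q \<longrightarrow> q \<in> E) \<Longrightarrow>
     (\<forall>a \<in> Ob C. adm_monic C E (idm C a) \<and> adm_epic C E (idm C a)) \<Longrightarrow>
     (\<forall>i i'. adm_monic C E i \<and> adm_monic C E i' \<and> cod C i = dom C i' \<longrightarrow>
        adm_monic C E (cmp C i' i)) \<Longrightarrow>
     (\<forall>d d'. adm_epic C E d \<and> adm_epic C E d' \<and> cod C d = dom C d' \<longrightarrow>
        adm_epic C E (cmp C d' d)) \<Longrightarrow>
     (\<forall>i f. adm_monic C E i \<and> f \<in> Mor C \<and> dom C f = dom C i \<longrightarrow>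
        (\<exists>i' f'. is_pushout C i f i' f' \<and> adm_monic C E i')) \<Longrightarrow>
     (\<forall>d f. adm_epic C E d \<and> f \<in> Mor C \<and> cod C f = cod C d \<longrightarrow>
        (\<exists>d' f'. is_pullback C d f d' f' \<and> adm_epic C E d')) \<Longrightarrow> exact_structure C E"
  unfolding exact_structure_def by (intro conjI)


lemma swap_coker:
  assumes pre: "preadditive C" and E: "exact_structure C E" and p: "(i, d) \<in> E"
    and kc': "kc_pair C (i, d')"
  shows "(i, d') \<in> E"
proof -
  have cat: "category C" using pre by (simp add: preadditive_def)
  have kc: "kc_pair C (i, d)" using ex_kc[OF E p] .
  obtain u v where u: "u \<in> hom C (cod C d) (cod C d')" "v \<in> hom C (cod C d') (cod C d)"
     "cmp C v u = idm C (cod C d)" "cmp C u v = idm C (cod C d')" "d' = cmp C u d"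
    using coker_unique[OF pre kc kc'] by blast
  have i: "i \<in> hom C (dom C i) (cod C i)" and d: "d \<in> hom C (cod C i) (cod C d)"
    and d': "d' \<in> hom C (cod C i) (cod C d')" using kc_homs[OF kc] kc_homs[OF kc'] by auto
  have O1: "dom C i \<in> Ob C" using ob_dom[OF cat i] .
  have O2: "cod C i \<in> Ob C" using ob_cod[OF cat i] .
  have "kc_iso C (i, d) (i, d')"
    unfolding kc_iso_def fst_conv snd_conv
    apply (rule exI[of _ "idm C (dom C i)"], rule exI[of _ "idm C (cod C i)"], rule exI[of _ u])
    using id_hom[OF cat O1] id_hom[OF cat O2] u id_iso[OF cat O1] id_iso[OF cat O2]
      iso_of[OF cat u(1,2,3,4)] id_r[OF cat i] id_l[OF cat i] id_r[OF cat d'] by simp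
  thus ?thesis using ex_iso[OF E p kc'] by blast
qed

lemma swap_ker:
  assumes pre: "preadditive C" and E: "exact_structure C E" and p: "(i, d) \<in> E"
    and kc': "kc_pair C (i', d)"
  shows "(i', d) \<in> E"
proof -
  have cat: "category C" using pre by (simp add: preadditive_def)
  have kc: "kc_pair C (i, d)" using ex_kc[OF E p] .
  obtain u v where u: "u \<in> hom C (dom C i) (dom C i')" "v \<in> hom C (dom C i') (dom C i)"
     "cmp C v u = idm C (dom C i)" "cmp C u v = idm C (dom C i')" "i = cmp C i' u"
    using ker_unique[OF pre kc kc'] by blast
  have i: "i \<in> hom C (dom C i) (cod C i)" and d: "d \<in> hom C (cod C i) (cod C d)"
    and i': "i' \<in> hom C (dom C i') (cod C i')" and d2: "d \<in> hom C (cod C i') (cod C d)"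
    using kc_homs[OF kc] kc_homs[OF kc'] by auto
  have ci: "cod C i' = cod C i" using d d2 by (simp add: hom_def)
  have O1: "cod C d \<in> Ob C" using ob_cod[OF cat d] .
  have O2: "cod C i \<in> Ob C" using ob_cod[OF cat i] .
  have "kc_iso C (i, d) (i', d)"
    unfolding kc_iso_def fst_conv snd_conv
    apply (rule exI[of _ u], rule exI[of _ "idm C (cod C i)"], rule exI[of _ "idm C (cod C d)"])
    using id_hom[OF cat O1] id_hom[OF cat O2] u id_iso[OF cat O1] id_iso[OF cat O2] ci
      iso_of[OF cat u(1,2,3,4)] id_l[OF cat i] id_l[OF cat d] id_r[OF cat d] by simp
  thus ?thesis using ex_iso[OF E p kc'] by blast
qed

lemma transp:
  assumes pre: "preadditive C" and E: "exact_structure C E" and p: "(i, d) \<in> E"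
    and u: "u \<in> hom C (cod C i) B'" and v: "v \<in> hom C B' (cod C i)"
    and vu: "cmp C v u = idm C (cod C i)" and uv: "cmp C u v = idm C B'"
  shows "(cmp C u i, cmp C d v) \<in> E"
proof -
  have cat: "category C" using pre by (simp add: preadditive_def)
  have kc: "kc_pair C (i, d)" using ex_kc[OF E p] .
  have kc': "kc_pair C (cmp C u i, cmp C d v)" using kc_transB[OF cat kc u v vu uv] .
  have i: "i \<in> hom C (dom C i) (cod C i)" and d: "d \<in> hom C (cod C i) (cod C d)"
    using kc_homs[OF kc] by auto
  have ui: "cmp C u i \<in> hom C (dom C i) B'" using comp_hom[OF cat i u] .
  have dv: "cmp C d v \<in> hom C B' (cod C d)" using comp_hom[OF cat v d] .
  have O1: "dom C i \<in> Ob C" using ob_dom[OF cat i] .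
  have O2: "cod C d \<in> Ob C" using ob_cod[OF cat d] .
  have sq: "cmp C (cmp C d v) u = cmp C (idm C (cod C d)) d"
    using assoc[OF cat u v d] vu id_r[OF cat d] id_l[OF cat d] by simp
  have "kc_iso C (i, d) (cmp C u i, cmp C d v)"
    unfolding kc_iso_def fst_conv snd_conv
    apply (rule exI[of _ "idm C (dom C i)"], rule exI[of _ u], rule exI[of _ "idm C (cod C d)"])
    using id_hom[OF cat O1] id_hom[OF cat O2] u ui dv id_iso[OF cat O1] id_iso[OF cat O2]
      iso_of[OF cat u v vu uv] id_r[OF cat ui] sq by (simp add: hom_def)
  thus ?thesis using ex_iso[OF E p kc'] by blast
qed

theorem lemma5p2:
  fixes C :: "('o, 'm) addcat" and \<Omega> :: "'i set" and E :: "'i \<Rightarrow> ('m \<times> 'm) set"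
  assumes "additive_category C"
    and "\<Omega> \<noteq> {}"
    and "\<And>\<omega>. \<omega> \<in> \<Omega> \<Longrightarrow> exact_structure C (E \<omega>)"
  shows "exact_structure C (\<Inter>\<omega>\<in>\<Omega>. E \<omega>)"
proof -
  have pre: "preadditive C" using assms(1) by (simp add: additive_category_def)
  have cat: "category C" using pre by (simp add: preadditive_def)
  obtain w0 where w0: "w0 \<in> \<Omega>" using assms(2) by blast
  have E0: "exact_structure C (E w0)" using assms(3)[OF w0] .
  define I where "I = (\<Inter>\<omega>\<in>\<Omega>. E \<omega>)"
  have memI: "\<And>p. p \<in> I \<longleftrightarrow> (\<forall>\<omega>\<in>\<Omega>. p \<in> E \<omega>)" unfolding I_def by blast
  have monI: "\<And>i \<omega>. adm_monic C I i \<Longrightarrow> \<omega> \<in> \<Omega> \<Longrightarrow> adm_monic C (E \<omega>) i"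
    unfolding adm_monic_def memI by blast
  have epiI: "\<And>i \<omega>. adm_epic C I i \<Longrightarrow> \<omega> \<in> \<Omega> \<Longrightarrow> adm_epic C (E \<omega>) i"
    unfolding adm_epic_def memI by blast
  have liftM: "adm_monic C I i" if h: "\<And>\<omega>. \<omega> \<in> \<Omega> \<Longrightarrow> adm_monic C (E \<omega>) i" for i
  proof -
    obtain d0 where d0: "(i, d0) \<in> E w0" using h[OF w0] unfolding adm_monic_def by blast
    have "(i, d0) \<in> E \<omega>" if w: "\<omega> \<in> \<Omega>" for \<omega>
    proof -
      obtain d where "(i, d) \<in> E \<omega>" using h[OF w] unfolding adm_monic_def by blast
      thus ?thesis using swap_coker[OF pre assms(3)[OF w] _ ex_kc[OF E0 d0]] by blast
    qed
    thus ?thesis unfolding adm_monic_def memI by blast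
  qed
  have liftE: "adm_epic C I d" if h: "\<And>\<omega>. \<omega> \<in> \<Omega> \<Longrightarrow> adm_epic C (E \<omega>) d" for d
  proof -
    obtain i0 where i0: "(i0, d) \<in> E w0" using h[OF w0] unfolding adm_epic_def by blast
    have "(i0, d) \<in> E \<omega>" if w: "\<omega> \<in> \<Omega>" for \<omega>
    proof -
      obtain i where "(i, d) \<in> E \<omega>" using h[OF w] unfolding adm_epic_def by blast
      thus ?thesis using swap_ker[OF pre assms(3)[OF w] _ ex_kc[OF E0 i0]] by blast
    qed
    thus ?thesis unfolding adm_epic_def memI by blast
  qed
  have ax1: "\<forall>p \<in> I. kc_pair C p" using ex_kc[OF E0] memI w0 by blast
  have ax2: "\<forall>p \<in> I. \<forall>q. kc_pair C q \<and> kc_iso C p q \<longrightarrow> q \<in> I"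
  proof (intro ballI allI impI)
    fix p q assume p: "p \<in> I" and q: "kc_pair C q \<and> kc_iso C p q"
    show "q \<in> I" unfolding memI
      using ex_iso[OF assms(3) _ conjunct1[OF q] conjunct2[OF q]] p memI by blast
  qed
  have ax3: "\<forall>a \<in> Ob C. adm_monic C I (idm C a) \<and> adm_epic C I (idm C a)"
  proof
    fix a assume a: "a \<in> Ob C"
    show "adm_monic C I (idm C a) \<and> adm_epic C I (idm C a)"
      using liftM liftE ex_id[OF assms(3) a] by blast
  qed
  have ax4: "\<forall>i i'. adm_monic C I i \<and> adm_monic C I i' \<and> cod C i = dom C i' \<longrightarrow>
        adm_monic C I (cmp C i' i)"
  proof (intro allI impI)
    fix i i' assume h: "adm_monic C I i \<and> adm_monic C I i' \<and> cod C i = dom C i'"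
    show "adm_monic C I (cmp C i' i)"
    proof (rule liftM)
      fix \<omega> assume w: "\<omega> \<in> \<Omega>"
      show "adm_monic C (E \<omega>) (cmp C i' i)"
        using h monI[OF _ w] ex_compM[OF assms(3)[OF w]] by blast
    qed
  qed
  have ax5: "\<forall>d d'. adm_epic C I d \<and> adm_epic C I d' \<and> cod C d = dom C d' \<longrightarrow>
        adm_epic C I (cmp C d' d)"
  proof (intro allI impI)
    fix i i' assume h: "adm_epic C I i \<and> adm_epic C I i' \<and> cod C i = dom C i'"
    show "adm_epic C I (cmp C i' i)"
    proof (rule liftE)
      fix \<omega> assume w: "\<omega> \<in> \<Omega>"
      show "adm_epic C (E \<omega>) (cmp C i' i)"
        using h epiI[OF _ w] ex_compE[OF assms(3)[OF w]] by blast
    qed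
  qed
  have ax6: "\<forall>i f. adm_monic C I i \<and> f \<in> Mor C \<and> dom C f = dom C i \<longrightarrow>
        (\<exists>i' f'. is_pushout C i f i' f' \<and> adm_monic C I i')"
  proof (intro allI impI)
    fix i f assume h: "adm_monic C I i \<and> f \<in> Mor C \<and> dom C f = dom C i"
    have PO: "\<exists>i' f'. is_pushout C i f i' f' \<and> adm_monic C (E \<omega>) i'" if w: "\<omega> \<in> \<Omega>" for \<omega>
      using h monI[OF _ w] ex_po[OF assms(3)[OF w]] by blast
    obtain i0 f0 e0 where p0: "is_pushout C i f i0 f0" and e0: "(i0, e0) \<in> E w0"
      using PO[OF w0] unfolding adm_monic_def by blast
    have "(i0, e0) \<in> E \<omega>" if w: "\<omega> \<in> \<Omega>" for \<omega>
    proof -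
      obtain i1 f1 e1 where p1: "is_pushout C i f i1 f1" and e1: "(i1, e1) \<in> E \<omega>"
        using PO[OF w] unfolding adm_monic_def by blast
      obtain u v where u: "u \<in> hom C (cod C i1) (cod C i0)" "v \<in> hom C (cod C i0) (cod C i1)"
        "cmp C v u = idm C (cod C i1)" "cmp C u v = idm C (cod C i0)" "cmp C u i1 = i0"
        using po_unique[OF pre p1 p0] by blast
      have "(cmp C u i1, cmp C e1 v) \<in> E \<omega>" using transp[OF pre assms(3)[OF w] e1 u(1-4)] .
      hence "(i0, cmp C e1 v) \<in> E \<omega>" using u(5) by simp
      thus ?thesis using swap_coker[OF pre assms(3)[OF w] _ ex_kc[OF E0 e0]] by blast
    qed
    hence "adm_monic C I i0" unfolding adm_monic_def memI by blast
    thus "\<exists>i' f'. is_pushout C i f i' f' \<and> adm_monic C I i'" using p0 by blast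
  qed
  have ax7: "\<forall>d f. adm_epic C I d \<and> f \<in> Mor C \<and> cod C f = cod C d \<longrightarrow>
        (\<exists>d' f'. is_pullback C d f d' f' \<and> adm_epic C I d')"
  proof (intro allI impI)
    fix d f assume h: "adm_epic C I d \<and> f \<in> Mor C \<and> cod C f = cod C d"
    have PB: "\<exists>d' f'. is_pullback C d f d' f' \<and> adm_epic C (E \<omega>) d'" if w: "\<omega> \<in> \<Omega>" for \<omega>
      using h epiI[OF _ w] ex_pb[OF assms(3)[OF w]] by blast
    obtain d0 f0 k0 where p0: "is_pullback C d f d0 f0" and k0: "(k0, d0) \<in> E w0"
      using PB[OF w0] unfolding adm_epic_def by blast
    have "(k0, d0) \<in> E \<omega>" if w: "\<omega> \<in> \<Omega>" for \<omega>
    proof -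
      obtain d1 f1 k1 where p1: "is_pullback C d f d1 f1" and k1: "(k1, d1) \<in> E \<omega>"
        using PB[OF w] unfolding adm_epic_def by blast
      obtain u v where u: "u \<in> hom C (dom C d0) (dom C d1)" "v \<in> hom C (dom C d1) (dom C d0)"
        "cmp C v u = idm C (dom C d0)" "cmp C u v = idm C (dom C d1)" "cmp C d1 u = d0"
        using pb_unique[OF pre p0 p1] by blast
      have cd: "cod C k1 = dom C d1" using kc_homs[OF ex_kc[OF assms(3)[OF w] k1]] by (simp add: hom_def)
      have "(cmp C v k1, cmp C d1 u) \<in> E \<omega>"
        using transp[OF pre assms(3)[OF w] k1, of v "dom C d0" u] u(1-4) cd by simp
      hence "(cmp C v k1, d0) \<in> E \<omega>" using u(5) by simp
      thus ?thesis using swap_ker[OF pre assms(3)[OF w] _ ex_kc[OF E0 k0]] by blast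
    qed
    hence "adm_epic C I d0" unfolding adm_epic_def memI by blast
    thus "\<exists>d' f'. is_pullback C d f d' f' \<and> adm_epic C I d'" using p0 by blast
  qed
  show ?thesis unfolding I_def[symmetric] by (rule ex_intro[OF ax1 ax2 ax3 ax4 ax5 ax6 ax7])
qed

end
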